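(* Let $\tau:\mathbb{F}_p((t))^d\to\mathbb{F}_p((t))^d$, $(f_1,\dots,f_d)\mapsto(tf_1,\dots,tf_d)$, and let $\phi:\mathbb{F}_p((t))\to\mathrm{Aut}(\mathbb{F}_p((t))^d)$ be a continuous homomorphism satisfying $\phi(tf)=\tau\circ\phi(f)\circ\tau^{-1}$ for all $f$. Suppose that for every $f\in\mathbb{F}_p((t))$ the block matrix of $\phi(f)$ is lower triangular, i.e. $\phi(f)_{i,j}=0$ whenever $j>i$. Let $\mathcal{A}$ be the subalgebra of $\mathrm{End}(\mathbb{F}_p((t))^d)$ generated by $\{\phi(t^r)-\mathrm{Id}: r\in\mathbb{Z}\}$ and $\mathcal{A}^d=\{a_1\cdots a_d : a_1,\dots,a_d\in\mathcal{A}\}$. Then $B_{i,i}=0$ for every $B\in\mathcal{A}^d$ and every $i\in\mathbb{Z}$.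
   Context: $\mathrm{Aut}(\mathbb{F}_p((t))^d)$ has the Braconnier topology (basis of identity neighbourhoods $\{\alpha:\alpha(x)-x\in U,\ \alpha^{-1}(x)-x\in U\ \forall x\in K\}$, $K$ compact, $U$ an identity neighbourhood). $\mathrm{End}(\mathbb{F}_p((t))^d)$ is the ring of continuous additive endomorphisms. For $n\in\mathbb{Z}$ let $\mathbb{V}_n=\{(a_1t^n,\dots,a_dt^n):a_r\in\mathbb{F}_p\}\cong\mathbb{F}_p^d$, $\pi_n$ the projection onto $\mathbb{V}_n$ taking $t^n$-coefficients, and for $A\in\mathrm{End}$, $A_{i,j}=\pi_i\circ A|_{\mathbb{V}_j}$ as a $d\times d$ matrix over $\mathbb{F}_p$. *)

theory Defs
  imports "HOL-Analysis.Analysis" "HOL-Computational_Algebra.Formal_Laurent_Series"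
begin

text \<open>Throughout, 'k is a finite field of prime cardinality p (i.e. F_p), 'k fls is
F_p((t)) with its t-adic (metric) topology from the library, and
('k fls)^'d is F_p((t))^d with the product topology, d = CARD('d).\<close>

type_synonym ('k, 'd) lsv = "'k fls ^ 'd"

definition is_End :: "(('k::field, 'd::finite) lsv \<Rightarrow> ('k, 'd) lsv) \<Rightarrow> bool" where
  "is_End A \<longleftrightarrow> (\<forall>x y. A (x + y) = A x + A y) \<and> continuous_on UNIV A"

definition Aut :: "(('k::field, 'd::finite) lsv \<Rightarrow> ('k, 'd) lsv) set" where
  "Aut = {A. bij A \<and> is_End A \<and> is_End (inv A)}"

definition zero_nbhd :: "('k::field, 'd::finite) lsv set \<Rightarrow> bool" where
  "zero_nbhd U \<longleftrightarrow> (\<exists>S. open S \<and> 0 \<in> S \<and> S \<subseteq> U)"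

definition brac_nbhd :: "('k::field, 'd::finite) lsv set \<Rightarrow> ('k, 'd) lsv set
    \<Rightarrow> (('k, 'd) lsv \<Rightarrow> ('k, 'd) lsv) set" where
  "brac_nbhd K U = {\<alpha> \<in> Aut. \<forall>x\<in>K. \<alpha> x - x \<in> U \<and> inv \<alpha> x - x \<in> U}"

text \<open>The Braconnier topology on Aut: the group topology in which the sets
brac_nbhd K U (K compact, U an identity neighbourhood) form a basis of
identity neighbourhoods; the neighbourhoods of alpha are its translates.\<close>
definition braconnier_top :: "(('k::field, 'd::finite) lsv \<Rightarrow> ('k, 'd) lsv) topology" where
  "braconnier_top = topology (\<lambda>S. S \<subseteq> Aut \<and>
     (\<forall>\<alpha>\<in>S. \<exists>K U. compact K \<and> zero_nbhd U \<and> (\<lambda>\<beta>. \<alpha> \<circ> \<beta>) ` brac_nbhd K U \<subseteq> S))"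

definition tau :: "('k::field, 'd::finite) lsv \<Rightarrow> ('k, 'd) lsv" where
  "tau v = (\<chi> j. fls_X * v $ j)"

definition tau_inv :: "('k::field, 'd::finite) lsv \<Rightarrow> ('k, 'd) lsv" where
  "tau_inv v = (\<chi> j. fls_X_inv * v $ j)"

text \<open>The block A_{i,j} = pi_i o A restricted to V_j, as a d x d matrix over F_p:
column s is pi_i(A(t^j e_s)), row r is its r-th coordinate.\<close>
definition block :: "(('k::field, 'd::finite) lsv \<Rightarrow> ('k, 'd) lsv) \<Rightarrow> int \<Rightarrow> int \<Rightarrow> 'k ^ 'd ^ 'd" where
  "block A i j = (\<chi> r s. fls_nth ((A (\<chi> s'. if s' = s then fls_X_intpow j else 0)) $ r) i)"

inductive_set gen_alg :: "(('k::field, 'd::finite) lsv \<Rightarrow> ('k, 'd) lsv) set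
    \<Rightarrow> (('k, 'd) lsv \<Rightarrow> ('k, 'd) lsv) set" for G where
  gen: "a \<in> G \<Longrightarrow> a \<in> gen_alg G"
| zero: "(\<lambda>v. 0) \<in> gen_alg G"
| add: "a \<in> gen_alg G \<Longrightarrow> b \<in> gen_alg G \<Longrightarrow> (\<lambda>v. a v + b v) \<in> gen_alg G"
| smult: "a \<in> gen_alg G \<Longrightarrow> (\<lambda>v. \<chi> j. fls_const c * a v $ j) \<in> gen_alg G"
| comp: "a \<in> gen_alg G \<Longrightarrow> b \<in> gen_alg G \<Longrightarrow> a \<circ> b \<in> gen_alg G"

definition alg_pow :: "(('k::field, 'd::finite) lsv \<Rightarrow> ('k, 'd) lsv) set \<Rightarrow> nat
    \<Rightarrow> (('k, 'd) lsv \<Rightarrow> ('k, 'd) lsv) set" where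
  "alg_pow A n = {foldr (\<circ>) as id | as. length as = n \<and> set as \<subseteq> A}"

end

theory Submission
  imports Defs "HOL-Number_Theory.Residues"
begin


lemma CHAR_eq_CARD_prime:
  assumes "prime CARD('k::{field,finite})"
  shows "CHAR('k) = CARD('k)"
proof -
  have "CHAR('k) dvd CARD('k)" by (rule CHAR_dvd_CARD)
  with assms have "CHAR('k) = 1 \<or> CHAR('k) = CARD('k)"
    using prime_nat_iff by blast
  then show ?thesis using CHAR_not_1 by auto
qed

lemma of_nat_CARD_zero:
  assumes "prime CARD('k::{field,finite})"
  shows "(of_nat CARD('k) :: 'k) = 0"
  using CHAR_eq_CARD_prime[OF assms] of_nat_CHAR[where 'a='k] by simp

lemma prime_field_of_nat:
  assumes "prime CARD('k::{field,finite})"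
  shows "\<exists>n. (c::'k) = of_nat n"
proof -
  let ?p = "CARD('k)"
  have ch: "CHAR('k) = ?p" by (rule CHAR_eq_CARD_prime[OF assms])
  have inj: "inj_on (of_nat :: nat \<Rightarrow> 'k) {..<?p}"
  proof (rule inj_onI)
    fix m n assume m: "m \<in> {..<?p}" and n: "n \<in> {..<?p}" and e: "(of_nat m::'k) = of_nat n"
    show "m = n"
    proof (rule ccontr)
      assume "m \<noteq> n"
      then consider "m < n" | "n < m" by linarith
      then show False
      proof cases
        case 1
        then have "?p dvd n - m" using of_nat_eq_iff_char_dvd[OF 1, where 'a='k] e ch by simp
        then show False using 1 n by (auto dest: dvd_imp_le)
      next
        case 2
        then have "?p dvd m - n" using of_nat_eq_iff_char_dvd[OF 2, where 'a='k] e ch by simp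
        then show False using 2 m by (auto dest: dvd_imp_le)
      qed
    qed
  qed
  then have "card ((of_nat :: nat \<Rightarrow> 'k) ` {..<?p}) = card (UNIV :: 'k set)"
    by (simp add: card_image)
  then have "(of_nat :: nat \<Rightarrow> 'k) ` {..<?p} = UNIV"
    by (simp add: card_subset_eq)
  then show ?thesis by (metis UNIV_I imageE)
qed

definition addv :: "('a::ab_group_add \<Rightarrow> 'b::ab_group_add) \<Rightarrow> bool" where
  "addv f \<longleftrightarrow> (\<forall>x y. f (x + y) = f x + f y)"

lemma addvD: "addv f \<Longrightarrow> f (x + y) = f x + f y" by (simp add: addv_def)
lemma addv_0: "addv f \<Longrightarrow> f 0 = 0"
  by (metis add_cancel_right_right addvD)
lemma addv_minus: "addv f \<Longrightarrow> f (x - y) = f x - f y"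
  by (metis add_diff_cancel addvD diff_add_cancel)
lemma addv_sum: "addv f \<Longrightarrow> f (sum g A) = (\<Sum>a\<in>A. f (g a))"
  by (induction A rule: infinite_finite_induct) (auto simp: addv_0 addvD)

lemma addv_comp: "addv f \<Longrightarrow> addv g \<Longrightarrow> addv (f \<circ> g)"
  by (simp add: addv_def)
lemma addv_funpow: fixes f :: "'a::ab_group_add \<Rightarrow> 'a" shows "addv f \<Longrightarrow> addv (f ^^ n)"
proof (induction n)
  case 0 then show ?case by (simp add: addv_def)
next
  case (Suc n) then show ?case by (metis addv_comp funpow.simps(2))
qed
lemma addv_foldr: "\<forall>f\<in>set fs. addv f \<Longrightarrow> addv (foldr (\<circ>) fs id)"
  by (induction fs) (auto simp: addv_def)

lemma addv_scale_nat:
  fixes f :: "'k::field ^ 'd \<Rightarrow> 'k ^ 'd"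
  assumes "addv f"
  shows "f (of_nat n *s v) = of_nat n *s f v"
proof (induction n)
  case 0 then show ?case using addv_0[OF assms] by simp
next
  case (Suc n)
  have "f (of_nat (Suc n) *s v) = f (v + of_nat n *s v)"
    by (simp add: vec.scale_left_distrib algebra_simps)
  also have "\<dots> = f v + of_nat n *s f v" using Suc addvD[OF assms] by simp
  also have "\<dots> = of_nat (Suc n) *s f v" by (simp add: vec.scale_left_distrib algebra_simps)
  finally show ?case .
qed

lemma addv_scale:
  fixes f :: "'k::{field,finite} ^ 'd \<Rightarrow> 'k ^ 'd"
  assumes "prime CARD('k)" "addv f"
  shows "f (c *s v) = c *s f v"
  using prime_field_of_nat[OF assms(1), of c] addv_scale_nat[OF assms(2)] by auto


lemma comm_funpow: "x \<circ> N = N \<circ> x \<Longrightarrow> x \<circ> (N ^^ c) = (N ^^ c) \<circ> x"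
proof (induction c)
  case 0 then show ?case by simp
next
  case (Suc c)
  have "x \<circ> N ^^ Suc c = (x \<circ> N) \<circ> N ^^ c" by (simp only: funpow.simps comp_assoc)
  also have "\<dots> = N \<circ> (x \<circ> N ^^ c)" using Suc by (simp only: comp_assoc)
  also have "\<dots> = N ^^ Suc c \<circ> x" using Suc by (simp only: funpow.simps comp_assoc)
  finally show ?case .
qed

lemma rearr:
  "\<forall>x\<in>set rs. x \<circ> N = N \<circ> x \<Longrightarrow>
   foldr (\<circ>) rs id = (N ^^ length (filter ((=) N) rs)) \<circ> foldr (\<circ>) (filter (\<lambda>x. x \<noteq> N) rs) id"
proof (induction rs)
  case Nil then show ?case by simp
next
  case (Cons x rs)
  show ?case
  proof (cases "x = N")
    case True
    then show ?thesis using Cons by (simp add: comp_assoc)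
  next
    case False
    have IH: "foldr (\<circ>) rs id = (N ^^ length (filter ((=) N) rs)) \<circ> foldr (\<circ>) (filter (\<lambda>x. x \<noteq> N) rs) id"
      by (rule Cons.IH) (meson Cons.prems list.set_intros(2))
    have "foldr (\<circ>) (x # rs) id = x \<circ> ((N ^^ length (filter ((=) N) rs)) \<circ> foldr (\<circ>) (filter (\<lambda>x. x \<noteq> N) rs) id)"
      by (simp only: foldr.simps o_apply IH)
    also have "\<dots> = (N ^^ length (filter ((=) N) rs)) \<circ> (x \<circ> foldr (\<circ>) (filter (\<lambda>x. x \<noteq> N) rs) id)"
    proof -
      have "x \<circ> N = N \<circ> x" using Cons.prems by (rule bspec) simp
      then have "x \<circ> N ^^ length (filter ((=) N) rs) = N ^^ length (filter ((=) N) rs) \<circ> x"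
        by (rule comm_funpow)
      then show ?thesis by (metis comp_assoc)
    qed
    also have "\<dots> = (N ^^ length (filter ((=) N) (x # rs))) \<circ> foldr (\<circ>) (filter (\<lambda>x. x \<noteq> N) (x # rs)) id"
    proof -
      have f1: "filter ((=) N) (x#rs) = filter ((=) N) rs" using False by simp
      have f2: "filter (\<lambda>y. y \<noteq> N) (x#rs) = x # filter (\<lambda>y. y \<noteq> N) rs" using False by simp
      show ?thesis unfolding f1 f2 by (simp only: foldr.simps o_apply)
    qed
    finally show ?thesis .
  qed
qed

lemma long_zero:
  assumes "finite S"
  shows "\<forall>N\<in>S. addv N \<Longrightarrow> \<forall>N\<in>S. \<forall>M\<in>S. N \<circ> M = M \<circ> N \<Longrightarrow> \<forall>N\<in>S. N ^^ p = (\<lambda>v. 0)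
    \<Longrightarrow> set rs \<subseteq> S \<Longrightarrow> card S * p < length rs \<Longrightarrow> foldr (\<circ>) rs id = (\<lambda>v::'a::ab_group_add. 0)"
  using assms
proof (induction S arbitrary: rs rule: finite_induct)
  case empty
  then show ?case by simp
next
  case (insert N S)
  let ?c = "length (filter ((=) N) rs)"
  let ?r = "filter (\<lambda>x. x \<noteq> N) rs"
  have eq: "foldr (\<circ>) rs id = (N ^^ ?c) \<circ> foldr (\<circ>) ?r id"
    using rearr[of rs N] insert.prems by blast
  have aN: "addv (N ^^ k)" for k using insert.prems addv_funpow by blast
  show ?case
  proof (cases "p \<le> ?c")
    case True
    have "N ^^ ?c = N ^^ (?c - p) \<circ> N ^^ p" using True by (simp add: funpow_add[symmetric])
    then have "N ^^ ?c = (\<lambda>v. 0)" using insert.prems aN[of "?c - p"] addv_0 by (auto simp: fun_eq_iff)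
    then show ?thesis using eq by (metis comp_apply)
  next
    case False
    have len: "length rs = ?c + length ?r"
      using sum_length_filter_compl[of "(=) N" rs] by (simp add: eq_commute)
    have "card S * p < length ?r"
      using insert.prems(5) insert.hyps False len by (simp add: algebra_simps)
    moreover have "set ?r \<subseteq> S" using insert.prems(4) by auto
    ultimately have "foldr (\<circ>) ?r id = (\<lambda>v. 0)"
      apply -
      apply (rule insert.IH)
      subgoal using insert.prems(1) by blast
      subgoal using insert.prems(2) by blast
      subgoal using insert.prems(3) by blast
      by assumption+
    then show ?thesis using eq addv_0[OF aN[of ?c]] by (metis comp_apply)
  qed
qed



definition Uf :: "('v \<Rightarrow> 'v) set \<Rightarrow> nat \<Rightarrow> 'v::ab_group_add set" where
  "Uf NS j = {v. \<forall>rs. set rs \<subseteq> NS \<longrightarrow> length rs = j \<longrightarrow> foldr (\<circ>) rs id v = 0}"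

lemma foldr_comp_init: "foldr (\<circ>) rs g = foldr (\<circ>) rs id \<circ> g"
  by (induction rs) (simp_all add: comp_assoc)

lemma foldr_snoc_apply: "foldr (\<circ>) (rs @ [N]) id v = foldr (\<circ>) rs id (N v)"
  using foldr_comp_init[of rs N] by simp

lemma Uf_0: "Uf NS 0 = {0}"
  by (auto simp: Uf_def)

lemma Uf_Suc: "v \<in> Uf NS (Suc j) \<longleftrightarrow> (\<forall>N\<in>NS. N v \<in> Uf NS j)"
proof
  assume v: "v \<in> Uf NS (Suc j)"
  show "\<forall>N\<in>NS. N v \<in> Uf NS j"
  proof (intro ballI)
    fix N assume N: "N \<in> NS"
    show "N v \<in> Uf NS j" unfolding Uf_def
    proof (intro CollectI allI impI)
      fix rs :: "('a \<Rightarrow> 'a) list" assume "set rs \<subseteq> NS" "length rs = j"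
      then have "set (rs @ [N]) \<subseteq> NS" "length (rs @ [N]) = Suc j" using N by auto
      then have "foldr (\<circ>) (rs @ [N]) id v = 0" using v unfolding Uf_def by blast
      then show "foldr (\<circ>) rs id (N v) = 0" by (simp only: foldr_snoc_apply)
    qed
  qed
next
  assume h: "\<forall>N\<in>NS. N v \<in> Uf NS j"
  show "v \<in> Uf NS (Suc j)" unfolding Uf_def
  proof (intro CollectI allI impI)
    fix rs :: "('a \<Rightarrow> 'a) list" assume rs: "set rs \<subseteq> NS" "length rs = Suc j"
    then obtain rs' N where e: "rs = rs' @ [N]" by (metis length_Suc_conv_rev)
    then have "N \<in> NS" "set rs' \<subseteq> NS" "length rs' = j" using rs by auto
    then have "foldr (\<circ>) rs' id (N v) = 0" using h unfolding Uf_def by blast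
    then show "foldr (\<circ>) rs id v = 0" using e by (simp only: foldr_snoc_apply)
  qed
qed

lemma Uf_mono_Suc:
  assumes "\<forall>N\<in>NS. addv N"
  shows "Uf NS j \<subseteq> Uf NS (Suc j)"
proof
  fix v assume v: "v \<in> Uf NS j"
  show "v \<in> Uf NS (Suc j)" unfolding Uf_def
  proof (intro CollectI allI impI)
    fix rs :: "('a \<Rightarrow> 'a) list" assume rs: "set rs \<subseteq> NS" "length rs = Suc j"
    then obtain N rs' where e: "rs = N # rs'" by (metis length_Suc_conv)
    then have "N \<in> NS" "set rs' \<subseteq> NS" "length rs' = j" using rs by auto
    then have "foldr (\<circ>) rs' id v = 0" using v unfolding Uf_def by auto
    moreover have "addv N" using assms \<open>N \<in> NS\<close> by blast
    ultimately show "foldr (\<circ>) rs id v = 0" using e addv_0[of N] by simp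
  qed
qed

lemma Uf_mono:
  assumes "\<forall>N\<in>NS. addv N" "j \<le> k"
  shows "Uf NS j \<subseteq> Uf NS k"
  using assms(2)
proof (induction k)
  case 0 then show ?case by simp
next
  case (Suc k)
  show ?case
  proof (cases "j = Suc k")
    case True then show ?thesis by simp
  next
    case False
    then have "j \<le> k" using Suc.prems by simp
    then have "Uf NS j \<subseteq> Uf NS k" by (rule Suc.IH)
    also have "\<dots> \<subseteq> Uf NS (Suc k)" by (rule Uf_mono_Suc[OF assms(1)])
    finally show ?thesis .
  qed
qed

lemma Uf_stable:
  assumes "Uf NS j = Uf NS (Suc j)"
  shows "Uf NS (j + k) = Uf NS j"
proof (induction k)
  case 0 then show ?case by simp
next
  case (Suc k)
  have "v \<in> Uf NS (Suc (j + k)) \<longleftrightarrow> v \<in> Uf NS (Suc j)" for v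
    unfolding Uf_Suc Suc.IH ..
  then have "Uf NS (Suc (j + k)) = Uf NS (Suc j)" by blast
  then show ?case using assms by simp
qed

lemma Uf_subspace:
  fixes NS :: "('k::{field,finite} ^ 'd \<Rightarrow> 'k ^ 'd) set"
  assumes p: "prime CARD('k)" and a: "\<forall>N\<in>NS. addv N"
  shows "vec.subspace (Uf NS j)"
  unfolding vec.subspace_def
proof (intro conjI ballI allI)
  have af: "set rs \<subseteq> NS \<Longrightarrow> addv (foldr (\<circ>) rs id)" for rs
    using a addv_foldr by blast
  show "0 \<in> Uf NS j" unfolding Uf_def using af addv_0 by blast
  show "x + y \<in> Uf NS j" if "x \<in> Uf NS j" "y \<in> Uf NS j" for x y
    using that af addvD unfolding Uf_def by fastforce
  show "c *s x \<in> Uf NS j" if "x \<in> Uf NS j" for c x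
    using that af addv_scale[OF p] unfolding Uf_def by fastforce
qed

lemma Uf_full:
  fixes NS :: "('k::{field,finite} ^ 'd \<Rightarrow> 'k ^ 'd) set"
  assumes p: "prime CARD('k)" and a: "\<forall>N\<in>NS. addv N"
    and c: "\<forall>N\<in>NS. \<forall>M\<in>NS. N \<circ> M = M \<circ> N"
    and n: "\<forall>N\<in>NS. N ^^ CARD('k) = (\<lambda>v. 0)"
  shows "Uf NS CARD('d) = UNIV"
proof (rule ccontr)
  assume ne: "Uf NS CARD('d) \<noteq> UNIV"
  have fin: "finite NS" by (rule finite_subset[of _ UNIV]) simp_all
  let ?L = "Suc (card NS * CARD('k))"
  have UL: "Uf NS ?L = UNIV"
    unfolding Uf_def using long_zero[OF fin a c n] by (auto simp: fun_eq_iff)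
  have strict: "Uf NS j \<noteq> Uf NS (Suc j)" if "j \<le> CARD('d)" for j
  proof
    assume eq: "Uf NS j = Uf NS (Suc j)"
    have "UNIV = Uf NS ?L" using UL by simp
    also have "\<dots> \<subseteq> Uf NS (j + ?L)" using Uf_mono[OF a] by simp
    also have "\<dots> = Uf NS j" by (rule Uf_stable[OF eq])
    also have "\<dots> \<subseteq> Uf NS CARD('d)" using Uf_mono[OF a that] .
    finally show False using ne by auto
  qed
  have sp: "vec.span (Uf NS j) = Uf NS j" for j
    using Uf_subspace[OF p a] vec.span_eq_iff by blast
  have dimge: "j \<le> vec.dim (Uf NS j)" if "j \<le> CARD('d)" for j
    using that
  proof (induction j)
    case 0 then show ?case by simp
  next
    case (Suc j)
    have "Uf NS j \<subset> Uf NS (Suc j)" using Uf_mono_Suc[OF a, of j] strict[of j] Suc.prems by auto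
    then have "vec.dim (Uf NS j) < vec.dim (Uf NS (Suc j))"
      using vec.dim_psubset[of "Uf NS j" "Uf NS (Suc j)"] sp by simp
    then show ?case using Suc by simp
  qed
  have "Uf NS CARD('d) \<subset> UNIV" using ne by auto
  then have "vec.dim (Uf NS CARD('d)) < vec.dim (UNIV :: ('k ^ 'd) set)"
    using vec.dim_psubset[of "Uf NS CARD('d)" UNIV] sp by simp
  then show False using dimge[of "CARD('d)"] vec_dim_card[where 'a='k and 'n='d] by simp
qed


lemma binom_funpow:
  fixes N :: "'k::field ^ 'd \<Rightarrow> 'k ^ 'd"
  assumes a: "addv N"
  shows "((\<lambda>v. v + N v) ^^ k) w = (\<Sum>i\<le>k. of_nat (k choose i) *s (N ^^ i) w)"
proof (induction k)
  case 0 then show ?case by simp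
next
  case (Suc k)
  let ?x = "\<lambda>i. (N ^^ i) w"
  have "((\<lambda>v. v + N v) ^^ Suc k) w = (\<Sum>i\<le>k. of_nat (k choose i) *s ?x i) + N (\<Sum>i\<le>k. of_nat (k choose i) *s ?x i)"
    using Suc by simp
  also have "N (\<Sum>i\<le>k. of_nat (k choose i) *s ?x i) = (\<Sum>i\<le>k. of_nat (k choose i) *s ?x (Suc i))"
    by (subst addv_sum[OF a]) (simp add: addv_scale_nat[OF a])
  also have "(\<Sum>i\<le>k. of_nat (k choose i) *s ?x i) = (\<Sum>i\<le>Suc k. of_nat (k choose i) *s ?x i)"
    by (simp add: binomial_eq_0)
  also have "\<dots> = ?x 0 + (\<Sum>i\<le>k. of_nat (k choose Suc i) *s ?x (Suc i))"
    by (subst sum.atMost_Suc_shift) simp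
  also have "?x 0 + (\<Sum>i\<le>k. of_nat (k choose Suc i) *s ?x (Suc i)) + (\<Sum>i\<le>k. of_nat (k choose i) *s ?x (Suc i))
      = ?x 0 + (\<Sum>i\<le>k. of_nat (Suc k choose Suc i) *s ?x (Suc i))"
    by (simp add: sum.distrib[symmetric] vec.scale_left_distrib add.commute)
  also have "\<dots> = (\<Sum>i\<le>Suc k. of_nat (Suc k choose i) *s ?x i)"
    by (subst sum.atMost_Suc_shift) simp
  finally show ?case .
qed

lemma nil_from_unipotent:
  fixes N :: "'k::{field,finite} ^ 'd \<Rightarrow> 'k ^ 'd"
  assumes p: "prime CARD('k)" and a: "addv N"
    and M: "((\<lambda>v. v + N v) ^^ CARD('k)) w = w"
  shows "(N ^^ CARD('k)) w = 0"
proof -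
  let ?p = "CARD('k)"
  let ?f = "\<lambda>i. of_nat (?p choose i) *s (N ^^ i) w"
  have z: "?f i = 0" if "i \<in> {..?p} - {0, ?p}" for i
  proof -
    have "?p dvd (?p choose i)" using that p by (intro dvd_choose_prime) auto
    then have "(of_nat (?p choose i) :: 'k) = 0"
      using of_nat_eq_0_iff_char_dvd CHAR_eq_CARD_prime[OF p] by metis
    then show ?thesis by simp
  qed
  have "(\<Sum>i\<le>?p. ?f i) = (\<Sum>i\<in>{0, ?p}. ?f i)"
    by (rule sum.mono_neutral_right) (use z in auto)
  also have "\<dots> = w + (N ^^ ?p) w" using prime_gt_1_nat[OF p] by simp
  finally have "w = w + (N ^^ ?p) w" using binom_funpow[OF a, of ?p w] M by simp
  then show ?thesis by simp
qed



definition Fn :: "int \<Rightarrow> ('k::field fls ^ 'd) set" where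
  "Fn n = {x. \<forall>s m. m < n \<longrightarrow> fls_nth (vec_nth x s) m = 0}"
definition lc :: "int \<Rightarrow> 'k::field fls ^ 'd \<Rightarrow> 'k ^ 'd" where
  "lc n x = (\<chi> s. fls_nth (vec_nth x s) n)"
definition emb :: "int \<Rightarrow> 'k::field ^ 'd \<Rightarrow> 'k fls ^ 'd" where
  "emb n w = (\<chi> s. fls_shift (-n) (fls_const (vec_nth w s)))"
definition Sc :: "'k::field \<Rightarrow> 'k fls ^ 'd \<Rightarrow> 'k fls ^ 'd" where
  "Sc c x = (\<chi> j. fls_const c * vec_nth x j)"

lemma emb_nth: "fls_nth (vec_nth (emb n w) s) m = (if m = n then vec_nth w s else 0)"
  by (simp add: emb_def)
lemma lc_nth: "vec_nth (lc n x) s = fls_nth (vec_nth x s) n"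
  by (simp add: lc_def)
lemma lc_emb: "lc n (emb n w) = w"
  by (simp add: lc_def emb_nth vec_eq_iff)
lemma emb_Fn: "emb n w \<in> Fn n"
  by (simp add: Fn_def emb_nth)
lemma FnD: "x \<in> Fn n \<Longrightarrow> m < n \<Longrightarrow> fls_nth (vec_nth x s) m = 0"
  by (simp add: Fn_def)
lemma Fn_add: "x \<in> Fn n \<Longrightarrow> y \<in> Fn n \<Longrightarrow> x + y \<in> Fn n"
  by (simp add: Fn_def)
lemma Fn_diff: "x \<in> Fn n \<Longrightarrow> y \<in> Fn n \<Longrightarrow> x - y \<in> Fn n"
  by (simp add: Fn_def)
lemma Fn_zero: "0 \<in> Fn n"
  by (simp add: Fn_def)
lemma Fn_Sc: "x \<in> Fn n \<Longrightarrow> Sc c x \<in> Fn n"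
  by (simp add: Fn_def Sc_def fls_mult_const_nth)
lemma Fn_mono: "m \<le> n \<Longrightarrow> Fn n \<subseteq> Fn m"
  by (auto simp: Fn_def)
lemma Fn_Suc: "x \<in> Fn n \<Longrightarrow> x - emb n (lc n x) \<in> Fn (n + 1)"
  unfolding Fn_def by (auto simp: emb_nth lc_nth)
lemma lc_Fn_Suc: "x \<in> Fn (n + 1) \<Longrightarrow> lc n x = 0"
  by (simp add: Fn_def lc_def vec_eq_iff)
lemma lc_add: "lc n (x + y) = lc n x + lc n y"
  by (simp add: lc_def vec_eq_iff)
lemma lc_diff: "lc n (x - y) = lc n x - lc n y"
  by (simp add: lc_def vec_eq_iff)
lemma lc_zero: "lc n 0 = 0"
  by (simp add: lc_def vec_eq_iff)
lemma lc_Sc: "lc n (Sc c x) = c *s lc n x"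
  by (simp add: lc_def Sc_def vec_eq_iff fls_mult_const_nth)
lemma emb_add: "emb n (v + w) = emb n v + emb n w"
  by (simp add: emb_def vec_eq_iff fls_plus_const[symmetric])

definition Good :: "('k::field fls ^ 'd \<Rightarrow> 'k fls ^ 'd) \<Rightarrow> bool" where
  "Good A \<longleftrightarrow> addv A \<and> (\<forall>n x. x \<in> Fn n \<longrightarrow> A x \<in> Fn n \<and> lc n (A x) = lc n (A (emb n (lc n x))))"

definition Dg :: "int \<Rightarrow> ('k::field fls ^ 'd \<Rightarrow> 'k fls ^ 'd) \<Rightarrow> 'k ^ 'd \<Rightarrow> 'k ^ 'd" where
  "Dg n A w = lc n (A (emb n w))"

lemma GoodD: "Good A \<Longrightarrow> x \<in> Fn n \<Longrightarrow> A x \<in> Fn n"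
  and GoodD2: "Good A \<Longrightarrow> x \<in> Fn n \<Longrightarrow> lc n (A x) = Dg n A (lc n x)"
  and Good_addv: "Good A \<Longrightarrow> addv A"
  by (simp_all add: Good_def Dg_def)

lemma Good_id: "Good (\<lambda>v. v)"
  by (simp add: Good_def addv_def lc_emb)
lemma Good_id': "Good id"
  by (simp add: Good_def addv_def lc_emb)
lemma Good_zero: "Good (\<lambda>v. 0)"
  by (simp add: Good_def addv_def Fn_zero)

lemma Good_add: fixes a b :: "'k::field fls ^ 'd \<Rightarrow> 'k fls ^ 'd" assumes "Good a" "Good b" shows "Good (\<lambda>v. a v + b v)"
  unfolding Good_def
proof (intro conjI allI impI)
  show "addv (\<lambda>v. a v + b v)" using Good_addv[OF assms(1)] Good_addv[OF assms(2)]
    by (simp add: addv_def algebra_simps)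
  fix n :: int and x :: "'k fls ^ 'd" assume x: "x \<in> Fn n"
  show "a x + b x \<in> Fn n" using GoodD[OF assms(1) x] GoodD[OF assms(2) x] by (rule Fn_add)
  show "lc n (a x + b x) = lc n (a (emb n (lc n x)) + b (emb n (lc n x)))"
    using GoodD2[OF assms(1) x] GoodD2[OF assms(2) x] by (simp add: lc_add Dg_def)
qed

lemma Good_diff: fixes a b :: "'k::field fls ^ 'd \<Rightarrow> 'k fls ^ 'd" assumes "Good a" "Good b" shows "Good (\<lambda>v. a v - b v)"
  unfolding Good_def
proof (intro conjI allI impI)
  show "addv (\<lambda>v. a v - b v)" using Good_addv[OF assms(1)] Good_addv[OF assms(2)]
    by (simp add: addv_def algebra_simps)
  fix n :: int and x :: "'k fls ^ 'd" assume x: "x \<in> Fn n"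
  show "a x - b x \<in> Fn n" using GoodD[OF assms(1) x] GoodD[OF assms(2) x] by (rule Fn_diff)
  show "lc n (a x - b x) = lc n (a (emb n (lc n x)) - b (emb n (lc n x)))"
    using GoodD2[OF assms(1) x] GoodD2[OF assms(2) x] by (simp add: lc_diff Dg_def)
qed

lemma Good_Sc: fixes a :: "'k::field fls ^ 'd \<Rightarrow> 'k fls ^ 'd" assumes "Good a" shows "Good (\<lambda>v. Sc c (a v))"
  unfolding Good_def
proof (intro conjI allI impI)
  show "addv (\<lambda>v. Sc c (a v))" using Good_addv[OF assms(1)]
    by (simp add: addv_def Sc_def vec_eq_iff algebra_simps)
  fix n :: int and x :: "'k fls ^ 'd" assume x: "x \<in> Fn n"
  show "Sc c (a x) \<in> Fn n" using GoodD[OF assms(1) x] by (rule Fn_Sc)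
  show "lc n (Sc c (a x)) = lc n (Sc c (a (emb n (lc n x))))"
    using GoodD2[OF assms(1) x] by (simp add: lc_Sc Dg_def)
qed

lemma Good_comp: fixes a b :: "'k::field fls ^ 'd \<Rightarrow> 'k fls ^ 'd" assumes "Good a" "Good b" shows "Good (a \<circ> b)"
  unfolding Good_def
proof (intro conjI allI impI)
  show "addv (a \<circ> b)" using Good_addv[OF assms(1)] Good_addv[OF assms(2)] by (rule addv_comp)
  fix n :: int and x :: "'k fls ^ 'd" assume x: "x \<in> Fn n"
  have bx: "b x \<in> Fn n" using GoodD[OF assms(2) x] .
  show "(a \<circ> b) x \<in> Fn n" using GoodD[OF assms(1) bx] by simp
  have be: "b (emb n (lc n x)) \<in> Fn n" using GoodD[OF assms(2) emb_Fn] .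
  have "lc n ((a \<circ> b) x) = Dg n a (lc n (b x))" using GoodD2[OF assms(1) bx] by simp
  also have "\<dots> = Dg n a (Dg n b (lc n x))" using GoodD2[OF assms(2) x] by simp
  also have "\<dots> = Dg n a (lc n (b (emb n (lc n x))))" by (simp add: Dg_def)
  also have "\<dots> = lc n ((a \<circ> b) (emb n (lc n x)))" using GoodD2[OF assms(1) be] by simp
  finally show "lc n ((a \<circ> b) x) = lc n ((a \<circ> b) (emb n (lc n x)))" .
qed

lemma Dg_comp: assumes "Good a" "Good b" shows "Dg n (a \<circ> b) w = Dg n a (Dg n b w)"
  using GoodD2[OF assms(1) GoodD[OF assms(2) emb_Fn]] by (simp add: Dg_def)

lemma Dg_add: "Dg n (\<lambda>v. a v + b v) w = Dg n a w + Dg n b w"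
  by (simp add: Dg_def lc_add)
lemma Dg_diff: "Dg n (\<lambda>v. a v - b v) w = Dg n a w - Dg n b w"
  by (simp add: Dg_def lc_diff)
lemma Dg_Sc: "Dg n (\<lambda>v. Sc c (a v)) w = c *s Dg n a w"
  by (simp add: Dg_def lc_Sc)
lemma Dg_id: "Dg n (\<lambda>v. v) w = w"
  by (simp add: Dg_def lc_emb)
lemma Dg_zero: "Dg n (\<lambda>v. 0) w = 0"
  by (simp add: Dg_def lc_zero)
lemma Dg_addv: "Good a \<Longrightarrow> addv (Dg n a)"
  using Good_addv[of a] by (simp add: addv_def Dg_def emb_add lc_add)



lemma dist_small_nth:
  fixes f :: "'k::field fls"
  assumes d: "dist f 0 < inverse (2 ^ nat n)" and m: "m \<le> n"
  shows "fls_nth f m = 0"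
proof (cases "f = 0")
  case True then show ?thesis by simp
next
  case False
  let ?sd = "fls_subdegree f"
  show ?thesis
  proof (cases "?sd \<ge> 0")
    case True
    then have "inverse (2 ^ nat ?sd) < (inverse (2 ^ nat n) :: real)"
      using d False by (simp add: dist_fls_def)
    then have "(2::real) ^ nat n < 2 ^ nat ?sd"
      by (simp add: inverse_less_iff_less)
    then have "nat n < nat ?sd" by simp
    then have "n < ?sd" using True by linarith
    then show ?thesis using m fls_eq0_below_subdegree[of m f] by simp
  next
    case neg: False
    then have "dist f 0 = 2 ^ nat (- ?sd)" using False by (simp add: dist_fls_def)
    moreover have "(1::real) \<le> 2 ^ nat (- ?sd)" by simp
    moreover have "inverse (2 ^ nat n) \<le> (1::real)" by (simp add: inverse_le_1_iff)
    ultimately show ?thesis using d by linarith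
  qed
qed

lemma dist_le_of_nth:
  fixes f :: "'k::field fls"
  assumes h: "\<And>m. m < int N \<Longrightarrow> fls_nth f m = 0"
  shows "dist f 0 \<le> inverse (2 ^ N)"
proof (cases "f = 0")
  case True then show ?thesis by simp
next
  case False
  let ?sd = "fls_subdegree f"
  have "fls_nth f ?sd \<noteq> 0" using False by (rule nth_fls_subdegree_nonzero)
  then have ge: "int N \<le> ?sd" using h[of ?sd] by (meson not_le)
  then have "dist f 0 = inverse (2 ^ nat ?sd)" using False by (simp add: dist_fls_def)
  also have "\<dots> \<le> inverse (2 ^ N)"
    using ge by (intro le_imp_inverse_le) (simp_all add: power_increasing_iff le_nat_iff)
  finally show ?thesis .
qed

lemma vec_dist_Fn:
  fixes y :: "'k::field fls ^ 'd"
  assumes "y \<in> Fn (int N)"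
  shows "dist y 0 \<le> real CARD('d) * inverse (2 ^ N)"
proof -
  have "dist y 0 = L2_set (\<lambda>i. dist (y $ i) (0 $ i)) UNIV" by (simp add: dist_vec_def)
  also have "\<dots> \<le> (\<Sum>i\<in>UNIV. dist (y $ i) (0 $ i))" by (rule L2_set_le_sum) simp
  also have "\<dots> \<le> (\<Sum>i\<in>(UNIV::'d set). inverse (2 ^ N))"
    using assms by (intro sum_mono) (simp add: dist_le_of_nth FnD)
  also have "\<dots> = real CARD('d) * inverse (2 ^ N)" by simp
  finally show ?thesis .
qed

lemma Fn_dist_small:
  fixes y :: "'k::field fls ^ 'd"
  assumes "dist y 0 < inverse (2 ^ nat n)"
  shows "y \<in> Fn n"
  unfolding Fn_def
proof (intro CollectI allI impI)
  fix s m assume "m < n"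
  have "dist (y $ s) 0 < inverse (2 ^ nat n)"
    using dist_vec_nth_le[of y s 0] assms by simp
  then show "fls_nth (y $ s) m = 0" using \<open>m < n\<close> by (intro dist_small_nth) auto
qed

lemma cont_Fn:
  fixes A :: "'k::field fls ^ 'd \<Rightarrow> 'k fls ^ 'd"
  assumes c: "continuous_on UNIV A" and z: "A 0 = 0"
  shows "\<exists>N. \<forall>y\<in>Fn N. A y \<in> Fn n"
proof -
  have "(0::real) < inverse (2 ^ nat n)" by simp
  then obtain d where d: "d > 0" and hd: "\<And>y. dist y 0 < d \<Longrightarrow> dist (A y) (A 0) < inverse (2 ^ nat n)"
    using c unfolding continuous_on_iff by blast
  have "0 < d / (real CARD('d) + 1)" using d by simp
  then obtain N where N: "(1/2::real) ^ N < d / (real CARD('d) + 1)"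
    using real_arch_pow_inv[of "d / (real CARD('d) + 1)" "1/2"] by auto
  have "\<forall>y\<in>Fn (int N). A y \<in> Fn n"
  proof
    fix y :: "'k fls ^ 'd" assume y: "y \<in> Fn (int N)"
    have "dist y 0 \<le> real CARD('d) * inverse (2 ^ N)" using vec_dist_Fn[OF y] .
    also have "\<dots> \<le> (real CARD('d) + 1) * inverse (2 ^ N)" by simp
    also have "\<dots> < (real CARD('d) + 1) * (d / (real CARD('d) + 1))"
    proof -
      have "inverse (2 ^ N) < d / (real CARD('d) + 1)" using N by (simp add: power_one_over inverse_eq_divide)
      then show ?thesis by (intro mult_strict_left_mono) simp_all
    qed
    also have "\<dots> = d" by simp
    finally have "dist y 0 < d" .
    then have "dist (A y) 0 < inverse (2 ^ nat n)" using hd z by fastforce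
    then show "A y \<in> Fn n" by (rule Fn_dist_small)
  qed
  then show ?thesis by blast
qed


lemma emb_decomp:
  fixes w :: "'k::field ^ 'd"
  shows "emb n w = (\<Sum>s\<in>UNIV. emb n (axis s (w $ s)))"
proof -
  have "emb n w $ t = (\<Sum>s\<in>UNIV. emb n (axis s (w $ s)) $ t)" for t
  proof -
    have "(\<Sum>s\<in>UNIV. emb n (axis s (w $ s)) $ t) = (\<Sum>s\<in>UNIV. if s = t then emb n w $ t else 0)"
      by (intro sum.cong) (auto simp: emb_def axis_def)
    also have "\<dots> = emb n w $ t" by simp
    finally show ?thesis by simp
  qed
  then show ?thesis by (simp add: vec_eq_iff sum_component)
qed

lemma emb_axis_1: "emb n (axis s (1::'k::field)) = (\<chi> s'. if s' = s then fls_X_intpow n else 0)"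
  by (simp add: vec_eq_iff emb_def axis_def fls_const_1)

lemma axis_of_nat_Suc: "axis s (of_nat (Suc k) :: 'k::field) = axis s 1 + axis s (of_nat k)"
  by (simp add: vec_eq_iff axis_def)

lemma Fn_sum: "(\<And>s. s \<in> S \<Longrightarrow> f s \<in> Fn n) \<Longrightarrow> sum f S \<in> Fn n"
  by (induction S rule: infinite_finite_induct) (auto intro: Fn_add Fn_zero)

lemma Good_of_End:
  fixes A :: "'k::{field,finite} fls ^ 'd \<Rightarrow> 'k fls ^ 'd"
  assumes p: "prime CARD('k)" and a: "addv A" and c: "continuous_on UNIV A"
    and low: "\<And>i j. j > i \<Longrightarrow> block A i j = 0"
  shows "Good A"
proof -
  have A0: "A 0 = 0" by (rule addv_0[OF a])
  have emb0: "emb n 0 = 0" for n :: int by (simp add: emb_def vec_eq_iff)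
  have embadd: "addv (emb n)" for n :: int by (simp add: addv_def emb_add)
  have base: "A (emb n (axis s (1::'k))) \<in> Fn n" for n s
    unfolding Fn_def
  proof (intro CollectI allI impI)
    fix r m assume "m < n"
    then have "block A m n $ r $ s = 0" using low by simp
    then show "fls_nth (A (emb n (axis s 1)) $ r) m = 0"
      by (simp add: block_def emb_axis_1)
  qed
  have nat_piece: "A (emb n (axis s (of_nat k :: 'k))) \<in> Fn n" for n s k
  proof (induction k)
    case 0
    have "emb n (axis s (0::'k)) = 0" by (simp add: emb_def axis_def vec_eq_iff)
    then show ?case using A0 Fn_zero by (metis of_nat_0)
  next
    case (Suc k)
    have "A (emb n (axis s (of_nat (Suc k)))) = A (emb n (axis s 1)) + A (emb n (axis s (of_nat k)))"
      by (simp only: axis_of_nat_Suc addvD[OF embadd] addvD[OF a])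
    then show ?case using base Suc by (simp add: Fn_add)
  qed
  have piece: "A (emb n (axis s (c::'k))) \<in> Fn n" for n s c
    using prime_field_of_nat[OF p, of c] nat_piece by auto
  have embA: "A (emb n w) \<in> Fn n" for n w
  proof -
    have "A (emb n w) = (\<Sum>s\<in>UNIV. A (emb n (axis s (w $ s))))"
      by (subst emb_decomp) (rule addv_sum[OF a])
    then show ?thesis using piece by (simp add: Fn_sum)
  qed
  have pres: "A y \<in> Fn n" if y: "y \<in> Fn n" for n y
  proof -
    obtain N where N: "\<forall>y\<in>Fn N. A y \<in> Fn n" using cont_Fn[OF c A0] by blast
    define M where "M = max N n"
    have M: "\<forall>y\<in>Fn M. A y \<in> Fn n" using N Fn_mono[of N M] by (auto simp: M_def)
    have step: "\<forall>y\<in>Fn (M - int k). A y \<in> Fn n" if "n \<le> M - int k" for k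
      using that
    proof (induction k)
      case 0 then show ?case using M by simp
    next
      case (Suc k)
      let ?j = "M - int (Suc k)"
      show ?case
      proof
        fix y :: "'k fls ^ 'd" assume y: "y \<in> Fn ?j"
        have r: "y - emb ?j (lc ?j y) \<in> Fn (M - int k)"
          using Fn_Suc[OF y] by simp
        have "A y = A (emb ?j (lc ?j y)) + A (y - emb ?j (lc ?j (y :: 'k fls ^ 'd)))"
          using addvD[OF a] by (metis add.commute diff_add_cancel)
        moreover have "A (emb ?j (lc ?j y)) \<in> Fn n"
          using embA Fn_mono[of n ?j] Suc.prems by auto
        moreover have "A (y - emb ?j (lc ?j y)) \<in> Fn n"
          using Suc.IH Suc.prems r by simp
        ultimately show "A y \<in> Fn n" by (simp add: Fn_add)
      qed
    qed
    have "n \<le> M - int (nat (M - n))" "M - int (nat (M - n)) = n" by (simp_all add: M_def)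
    then show ?thesis using step[of "nat (M - n)"] y by simp
  qed
  show ?thesis
    unfolding Good_def
  proof (intro conjI allI impI)
    show "addv A" by (rule a)
    fix n :: int and x :: "'k fls ^ 'd" assume x: "x \<in> Fn n"
    show "A x \<in> Fn n" by (rule pres[OF x])
    have r: "x - emb n (lc n x) \<in> Fn (n + 1)" by (rule Fn_Suc[OF x])
    have "A x = A (emb n (lc n x)) + A (x - emb n (lc n x))"
      using addvD[OF a] by (metis add.commute diff_add_cancel)
    then have "lc n (A x) = lc n (A (emb n (lc n x))) + lc n (A (x - emb n (lc n x)))"
      by (simp add: lc_add)
    also have "lc n (A (x - emb n (lc n x))) = 0" by (rule lc_Fn_Suc[OF pres[OF r]])
    finally show "lc n (A x) = lc n (A (emb n (lc n x)))" by simp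
  qed
qed



theorem mainTheorem15:
  fixes \<phi> :: "'k::{field,finite} fls \<Rightarrow> ('k fls ^ 'd::finite \<Rightarrow> 'k fls ^ 'd)"
  assumes p_prime: "prime CARD('k)"
    and into_Aut: "\<And>f. \<phi> f \<in> Aut"
    and hom: "\<And>f g. \<phi> (f + g) = \<phi> f \<circ> \<phi> g"
    and cont: "continuous_map euclidean braconnier_top \<phi>"
    and twist: "\<And>f. \<phi> (fls_X * f) = tau \<circ> \<phi> f \<circ> tau_inv"
    and lower: "\<And>f i j. j > i \<Longrightarrow> block (\<phi> f) i j = 0"
  shows "\<forall>B \<in> alg_pow (gen_alg {(\<lambda>v. \<phi> (fls_X_intpow r) v - v) | r. True}) CARD('d).
           \<forall>i::int. block B i i = 0"
proof (intro ballI allI)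
  let ?p = "CARD('k)"
  have addphi: "addv (\<phi> f)" for f
    using into_Aut[of f] by (simp add: Aut_def is_End_def addv_def)
  have contphi: "continuous_on UNIV (\<phi> f)" for f
    using into_Aut[of f] by (simp add: Aut_def is_End_def)
  have goodphi: "Good (\<phi> f)" for f
    by (rule Good_of_End[OF p_prime addphi contphi lower])
  have phi0: "\<phi> 0 = id"
  proof -
    have bij: "bij (\<phi> 0)" using into_Aut[of 0] by (simp add: Aut_def)
    have "\<phi> 0 = \<phi> 0 \<circ> \<phi> 0" using hom[of 0 0] by simp
    then have "\<phi> 0 (\<phi> 0 x) = \<phi> 0 x" for x by (metis comp_apply)
    then have "\<phi> 0 x = x" for x using bij_is_inj[OF bij] by (meson injD)
    then show ?thesis by (simp add: fun_eq_iff)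
  qed
  have phipow: "\<phi> f ^^ k = \<phi> (of_nat k * f)" for f k
  proof (induction k)
    case 0 then show ?case using phi0 by simp
  next
    case (Suc k)
    have "\<phi> f ^^ Suc k = \<phi> f \<circ> \<phi> (of_nat k * f)" using Suc by simp
    also have "\<dots> = \<phi> (f + of_nat k * f)" using hom by simp
    also have "f + of_nat k * f = of_nat (Suc k) * f" by (simp add: algebra_simps)
    finally show ?case .
  qed
  have charp: "(of_nat ?p :: 'k fls) = 0"
    using of_nat_CARD_zero[OF p_prime] by (simp add: fls_of_nat)
  have phip: "\<phi> f ^^ ?p = id" for f using phipow[where f=f and k="?p"] charp phi0 by simp

  fix B and i :: int
  assume B: "B \<in> alg_pow (gen_alg {(\<lambda>v. \<phi> (fls_X_intpow r) v - v) | r. True}) CARD('d)"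
  define G where "G r = (\<lambda>v. \<phi> (fls_X_intpow r) v - v)" for r
  have goodG: "Good (G r)" for r unfolding G_def by (rule Good_diff[OF goodphi Good_id])
  define NS where "NS = {Dg i (G r) | r. True}"
  have NSa: "\<forall>N\<in>NS. addv N" unfolding NS_def using Dg_addv goodG by blast
  have Gcomm: "G r \<circ> G s = G s \<circ> G r" for r s
  proof -
    have c: "\<phi> (fls_X_intpow r) \<circ> \<phi> (fls_X_intpow s) = \<phi> (fls_X_intpow s) \<circ> \<phi> (fls_X_intpow r)"
      using hom by (metis add.commute)
    have "(G r \<circ> G s) v = (G s \<circ> G r) v" for v
    proof -
      have "(G r \<circ> G s) v = \<phi> (fls_X_intpow r) (\<phi> (fls_X_intpow s) v) - \<phi> (fls_X_intpow r) v - \<phi> (fls_X_intpow s) v + v"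
        by (simp add: G_def addv_minus[OF addphi])
      moreover have "(G s \<circ> G r) v = \<phi> (fls_X_intpow s) (\<phi> (fls_X_intpow r) v) - \<phi> (fls_X_intpow s) v - \<phi> (fls_X_intpow r) v + v"
        by (simp add: G_def addv_minus[OF addphi])
      ultimately show ?thesis using c by (simp add: fun_eq_iff)
    qed
    then show ?thesis by (simp add: fun_eq_iff)
  qed
  have NSc: "\<forall>N\<in>NS. \<forall>M\<in>NS. N \<circ> M = M \<circ> N"
  proof (intro ballI)
    fix N M assume "N \<in> NS" "M \<in> NS"
    then obtain r s where N: "N = Dg i (G r)" and M: "M = Dg i (G s)" unfolding NS_def by blast
    have "(N \<circ> M) w = (M \<circ> N) w" for w
      using Dg_comp[OF goodG goodG, of i r s w] Dg_comp[OF goodG goodG, of i s r w] Gcomm[of r s]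
      by (simp add: N M)
    then show "N \<circ> M = M \<circ> N" by (simp add: fun_eq_iff)
  qed
  have Dgpow: "(Dg i (\<phi> f)) ^^ k = Dg i (\<phi> f ^^ k)" for f k
  proof (induction k)
    case 0 then show ?case by (simp add: fun_eq_iff Dg_def lc_emb)
  next
    case (Suc k)
    have gk: "Good (\<phi> f ^^ k)"
    proof (induction k)
      case 0 then show ?case using Good_id by (simp add: id_def)
    next
      case (Suc k) then show ?case using Good_comp[OF goodphi] by (metis funpow.simps(2))
    qed
    show ?case
    proof (rule ext)
      fix w
      have "(Dg i (\<phi> f) ^^ Suc k) w = Dg i (\<phi> f) ((Dg i (\<phi> f) ^^ k) w)" by simp
      also have "\<dots> = Dg i (\<phi> f) (Dg i (\<phi> f ^^ k) w)" using Suc.IH by simp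
      also have "\<dots> = Dg i (\<phi> f \<circ> \<phi> f ^^ k) w" by (rule Dg_comp[OF goodphi gk, symmetric])
      also have "\<dots> = Dg i (\<phi> f ^^ Suc k) w" by (simp only: funpow.simps(2))
      finally show "(Dg i (\<phi> f) ^^ Suc k) w = Dg i (\<phi> f ^^ Suc k) w" .
    qed
  qed
  have NSn: "\<forall>N\<in>NS. N ^^ ?p = (\<lambda>v. 0)"
  proof
    fix N assume "N \<in> NS"
    then obtain r where N: "N = Dg i (G r)" unfolding NS_def by blast
    have M: "(\<lambda>v. v + N v) = Dg i (\<phi> (fls_X_intpow r))"
      by (simp add: fun_eq_iff N G_def Dg_diff Dg_id)
    have "((\<lambda>v. v + N v) ^^ ?p) w = w" for w
      unfolding M Dgpow phip by (simp add: Dg_def lc_emb)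
    then have "(N ^^ ?p) w = 0" for w
      using nil_from_unipotent[OF p_prime] NSa \<open>N \<in> NS\<close> by blast
    then show "N ^^ ?p = (\<lambda>v. 0)" by (simp add: fun_eq_iff)
  qed
  have full: "Uf NS CARD('d) = UNIV" by (rule Uf_full[OF p_prime NSa NSc NSn])
  have sub: "vec.subspace (Uf NS j)" for j by (rule Uf_subspace[OF p_prime NSa])
  have P: "Good a \<and> (\<forall>j v. v \<in> Uf NS (Suc j) \<longrightarrow> Dg i a v \<in> Uf NS j)"
    if "a \<in> gen_alg {(\<lambda>v. \<phi> (fls_X_intpow r) v - v) | r. True}" for a
    using that
  proof (induction rule: gen_alg.induct)
    case (gen a)
    then obtain r where a: "a = G r" unfolding G_def by blast
    have "Dg i a \<in> NS" unfolding NS_def a by blast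
    then show ?case using goodG a Uf_Suc by blast
  next
    case zero
    show ?case using vec.subspace_0[OF sub] by (simp add: Good_zero Dg_zero)
  next
    case (add a b)
    then show ?case using vec.subspace_add[OF sub] by (simp add: Good_add Dg_add)
  next
    case (smult a c)
    have e: "(\<lambda>v. \<chi> j. fls_const c * a v $ j) = (\<lambda>v. Sc c (a v))" by (simp add: Sc_def)
    show ?case unfolding e using smult vec.subspace_scale[OF sub] by (simp add: Good_Sc Dg_Sc)
  next
    case (comp a b)
    show ?case
    proof (intro conjI allI impI)
      show "Good (a \<circ> b)" using comp Good_comp by blast
      fix j v assume v: "v \<in> Uf NS (Suc j)"
      have "Dg i b v \<in> Uf NS j" using comp v by blast
      then have "Dg i b v \<in> Uf NS (Suc j)" using Uf_mono_Suc[OF NSa] by blast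
      then have "Dg i a (Dg i b v) \<in> Uf NS j" using comp by blast
      then show "Dg i (a \<circ> b) v \<in> Uf NS j" using Dg_comp[of a b i v] comp by simp
    qed
  qed
  obtain as where as: "B = foldr (\<circ>) as id" "length as = CARD('d)"
    "set as \<subseteq> gen_alg {(\<lambda>v. \<phi> (fls_X_intpow r) v - v) | r. True}"
    using B unfolding alg_pow_def by blast
  have L: "Good (foldr (\<circ>) bs id) \<and> (\<forall>j v. v \<in> Uf NS (j + length bs) \<longrightarrow> Dg i (foldr (\<circ>) bs id) v \<in> Uf NS j)"
    if "set bs \<subseteq> gen_alg {(\<lambda>v. \<phi> (fls_X_intpow r) v - v) | r. True}" for bs
    using that
  proof (induction bs)
    case Nil
    show ?case by (simp add: Good_id id_def Dg_def lc_emb)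
  next
    case (Cons a bs)
    have Pa: "Good a \<and> (\<forall>j v. v \<in> Uf NS (Suc j) \<longrightarrow> Dg i a v \<in> Uf NS j)" using P Cons.prems by simp
    have IH: "Good (foldr (\<circ>) bs id) \<and> (\<forall>j v. v \<in> Uf NS (j + length bs) \<longrightarrow> Dg i (foldr (\<circ>) bs id) v \<in> Uf NS j)"
      by (rule Cons.IH) (use Cons.prems in auto)
    have IH1: "\<forall>j v. v \<in> Uf NS (j + length bs) \<longrightarrow> Dg i (foldr (\<circ>) bs id) v \<in> Uf NS j"
      and IH2: "Good (foldr (\<circ>) bs id)" using IH by auto
    have G2: "Good (foldr (\<circ>) (a # bs) id)" using Good_comp[of a "foldr (\<circ>) bs id"] Pa IH2 by simp
    have G1: "\<forall>j v. v \<in> Uf NS (j + length (a # bs)) \<longrightarrow> Dg i (foldr (\<circ>) (a # bs) id) v \<in> Uf NS j"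
    proof (intro allI impI)
      fix j v assume v: "v \<in> Uf NS (j + length (a # bs))"
      have "Dg i (foldr (\<circ>) bs id) v \<in> Uf NS (Suc j)" using IH1 v by simp
      then have "Dg i a (Dg i (foldr (\<circ>) bs id) v) \<in> Uf NS j" using Pa by blast
      then show "Dg i (foldr (\<circ>) (a # bs) id) v \<in> Uf NS j"
        using Dg_comp[of a "foldr (\<circ>) bs id" i v] Pa IH2 by simp
    qed
    show ?case using G1 G2 by blast
  qed
  have D0: "Dg i B w = 0" for w
  proof -
    have "w \<in> Uf NS (0 + length as)" using full as(2) by simp
    then have "Dg i B w \<in> Uf NS 0" using L[OF as(3)] as(1) by blast
    then show ?thesis by (simp add: Uf_0)
  qed
  show "block B i i = 0"
  proof -
    have "block B i i $ r $ s = 0" for r s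
    proof -
      have "block B i i $ r $ s = fls_nth (B (emb i (axis s 1)) $ r) i"
        by (simp add: block_def emb_axis_1)
      also have "\<dots> = Dg i B (axis s 1) $ r" by (simp add: Dg_def lc_def)
      also have "\<dots> = 0" using D0 by simp
      finally show ?thesis .
    qed
    then show ?thesis by (simp add: vec_eq_iff)
  qed
qed


end
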